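(* Assume that $\Omega$ is a slice domain or a product domain. Let $f$ be a tame slice regular function on $\Omega$ with $N(f)\not\equiv0$. Then, for every $g\in\mathcal{S}^0(\Omega)$, if $f\cdot g\equiv0$ or $g\cdot f\equiv0$, then $g\equiv0$.
   Context: Let $A$ be a finite-dimensional real algebra with unit $1$ ($\mathbb{R}$ identified with $\mathbb{R}1$) which is alternative (the associator $(x,y,z)=(xy)z-x(yz)$ is alternating), with a $^*$-involution $x\mapsto x^c$ (real linear, $(x^c)^c=x$, $(xy)^c=y^cx^c$, $r^c=r$ for $r\in\mathbb{R}$). Let $t(x)=x+x^c$, $n(x)=xx^c$, $\mathbb{S}_A=\{J\in A:t(J)=0,n(J)=1\}$ (assumed non-empty), $Q_A=\mathbb{R}\cup\{x:t(x),n(x)\in\mathbb{R},4n(x)>t(x)^2\}$; every $x\in Q_A$ is $\alpha+\beta J$ with $\alpha,\beta\in\mathbb{R}$, $J\in\mathbb{S}_A$. Let $D\subseteq\mathbb{C}$ be open, non-empty, invariant under conjugation, and $\Omega=\{\alpha+\beta J:\alpha+i\beta\in D,J\in\mathbb{S}_A\}$; $\Omega$ is a slice domain if $D$ is connected and meets $\mathbb{R}$, a product domain if $D\cap\mathbb{R}=\emptyset$ and $D$ has two connected components exchanged by conjugation. $A_{\mathbb{C}}=\{a+\imath b\}$ with $(a+\imath b)(a'+\imath b')=aa'-bb'+\imath(ab'+ba')$, $\overline{a+\imath b}=a-\imath b$, $(a+\imath b)^c=a^c+\imath b^c$. A stem function $F=F_1+\imath F_2:D\to A_{\mathbb{C}}$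 satisfies $F(\bar z)=\overline{F(z)}$ and induces $f=\mathcal{I}(F)$, $f(\alpha+\beta J)=F_1(\alpha+i\beta)+JF_2(\alpha+i\beta)$. $\mathcal{S}^0(\Omega)$ is the set of slice functions induced by continuous stem functions; $f$ is slice regular if $F$ is $\mathscr{C}^1$ and $\frac12\big(\frac{\partial F}{\partial\alpha}+\imath\frac{\partial F}{\partial\beta}\big)\equiv0$. Slice product $f\cdot g=\mathcal{I}(FG)$, $f^c=\mathcal{I}(F^c)$ ($F^c(z)=F(z)^c$), $N(f)=f\cdot f^c$; $f$ is slice preserving if $F_1,F_2$ are real valued, tame if $N(f)$ is slice preserving and $N(f)=N(f^c)$. *)

theory Defs
  imports "HOL-Analysis.Analysis"
begin

text \<open>The algebra A is modelled by a finite-dimensional real vector space type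
 'a (class euclidean_space) together with a multiplication mul, a unit one
 (R is identified with R one via r \<mapsto> r *R one) and a *-involution cj.\<close>

definition assoc_alg :: "('a \<Rightarrow> 'a \<Rightarrow> 'a::real_vector) \<Rightarrow> 'a \<Rightarrow> 'a \<Rightarrow> 'a \<Rightarrow> 'a" where
  "assoc_alg mul x y z = mul (mul x y) z - mul x (mul y z)"

definition alt_star_alg ::
  "('a::euclidean_space \<Rightarrow> 'a \<Rightarrow> 'a) \<Rightarrow> 'a \<Rightarrow> ('a \<Rightarrow> 'a) \<Rightarrow> bool" where
  "alt_star_alg mul one cj \<longleftrightarrow>
     bilinear mul \<and> one \<noteq> 0 \<and>
     (\<forall>x. mul one x = x \<and> mul x one = x) \<and>
     (\<forall>x y. assoc_alg mul x x y = 0 \<and> assoc_alg mul x y x = 0 \<and> assoc_alg mul y x x = 0) \<and>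
     linear cj \<and> (\<forall>x. cj (cj x) = x) \<and>
     (\<forall>x y. cj (mul x y) = mul (cj y) (cj x)) \<and>
     (\<forall>r. cj (r *\<^sub>R one) = r *\<^sub>R one)"

definition trA :: "('a::real_vector \<Rightarrow> 'a) \<Rightarrow> 'a \<Rightarrow> 'a" where
  "trA cj x = x + cj x"

definition nA :: "('a \<Rightarrow> 'a \<Rightarrow> 'a) \<Rightarrow> ('a \<Rightarrow> 'a) \<Rightarrow> 'a \<Rightarrow> 'a" where
  "nA mul cj x = mul x (cj x)"

definition sphS :: "('a::real_vector \<Rightarrow> 'a \<Rightarrow> 'a) \<Rightarrow> 'a \<Rightarrow> ('a \<Rightarrow> 'a) \<Rightarrow> 'a set" where
  "sphS mul one cj = {J. trA cj J = 0 \<and> nA mul cj J = one}"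

definition admissible_D :: "complex set \<Rightarrow> bool" where
  "admissible_D D \<longleftrightarrow> open D \<and> D \<noteq> {} \<and> (\<forall>z\<in>D. cnj z \<in> D)"

definition slice_domain_D :: "complex set \<Rightarrow> bool" where
  "slice_domain_D D \<longleftrightarrow> connected D \<and> D \<inter> \<real> \<noteq> {}"

definition product_domain_D :: "complex set \<Rightarrow> bool" where
  "product_domain_D D \<longleftrightarrow> D \<inter> \<real> = {} \<and>
     (\<exists>C. components D = {C, cnj ` C} \<and> C \<noteq> cnj ` C)"

text \<open>A_C = A + i A is represented by pairs (a, b) meaning a + i b.\<close>
definition ac_mul :: "('a::real_vector \<Rightarrow> 'a \<Rightarrow> 'a) \<Rightarrow> 'a \<times> 'a \<Rightarrow> 'a \<times> 'a \<Rightarrow> 'a \<times> 'a" where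
  "ac_mul mul p q = (mul (fst p) (fst q) - mul (snd p) (snd q),
                     mul (fst p) (snd q) + mul (snd p) (fst q))"

definition ac_cj :: "('a \<Rightarrow> 'a) \<Rightarrow> 'a \<times> 'a \<Rightarrow> 'a \<times> 'a" where
  "ac_cj cj p = (cj (fst p), cj (snd p))"

definition ac_i :: "'a::real_vector \<times> 'a \<Rightarrow> 'a \<times> 'a" where
  "ac_i p = (- snd p, fst p)"

text \<open>Stem functions F = F1 + i F2 : D \<rightarrow> A_C with F(conj z) = conj(F z).\<close>
definition stem_on :: "complex set \<Rightarrow> (complex \<Rightarrow> 'a::real_vector \<times> 'a) \<Rightarrow> bool" where
  "stem_on D F \<longleftrightarrow> (\<forall>z\<in>D. F (cnj z) = (fst (F z), - snd (F z)))"

text \<open>Stem functions inducing elements of S^0(Omega): continuous stem functions.\<close>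
definition cont_stem_on :: "complex set \<Rightarrow> (complex \<Rightarrow> 'a::real_normed_vector \<times> 'a) \<Rightarrow> bool" where
  "cont_stem_on D F \<longleftrightarrow> stem_on D F \<and> continuous_on D F"

text \<open>Stem functions of slice regular functions: C^1 stem functions with
  (1/2)(dF/d alpha + i dF/d beta) = 0, where z = alpha + i beta.\<close>
definition regular_stem_on :: "complex set \<Rightarrow> (complex \<Rightarrow> 'a::real_normed_vector \<times> 'a) \<Rightarrow> bool" where
  "regular_stem_on D F \<longleftrightarrow> stem_on D F \<and>
     (\<exists>DF. (\<forall>z\<in>D. (F has_derivative DF z) (at z)) \<and>
           (\<forall>h. continuous_on D (\<lambda>z. DF z h)) \<and>
           (\<forall>z\<in>D. (1/2::real) *\<^sub>R (DF z 1 + ac_i (DF z \<i>)) = 0))"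

text \<open>Value of the induced slice function I(F) at the point alpha + beta J, z = alpha + i beta.\<close>
definition slice_val :: "('a \<Rightarrow> 'a \<Rightarrow> 'a::real_vector) \<Rightarrow> (complex \<Rightarrow> 'a \<times> 'a) \<Rightarrow> complex \<Rightarrow> 'a \<Rightarrow> 'a" where
  "slice_val mul F z J = fst (F z) + mul J (snd (F z))"

definition vanishes_on ::
  "('a::real_vector \<Rightarrow> 'a \<Rightarrow> 'a) \<Rightarrow> 'a \<Rightarrow> ('a \<Rightarrow> 'a) \<Rightarrow> complex set \<Rightarrow> (complex \<Rightarrow> 'a \<times> 'a) \<Rightarrow> bool" where
  "vanishes_on mul one cj D F \<longleftrightarrow> (\<forall>z\<in>D. \<forall>J\<in>sphS mul one cj. slice_val mul F z J = 0)"

definition same_slice_on ::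
  "('a::real_vector \<Rightarrow> 'a \<Rightarrow> 'a) \<Rightarrow> 'a \<Rightarrow> ('a \<Rightarrow> 'a) \<Rightarrow> complex set \<Rightarrow> (complex \<Rightarrow> 'a \<times> 'a) \<Rightarrow> (complex \<Rightarrow> 'a \<times> 'a) \<Rightarrow> bool" where
  "same_slice_on mul one cj D F G \<longleftrightarrow>
     (\<forall>z\<in>D. \<forall>J\<in>sphS mul one cj. slice_val mul F z J = slice_val mul G z J)"

definition stem_prod :: "('a::real_vector \<Rightarrow> 'a \<Rightarrow> 'a) \<Rightarrow> (complex \<Rightarrow> 'a \<times> 'a) \<Rightarrow> (complex \<Rightarrow> 'a \<times> 'a) \<Rightarrow> complex \<Rightarrow> 'a \<times> 'a" where
  "stem_prod mul F G = (\<lambda>z. ac_mul mul (F z) (G z))"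

definition stem_cj :: "('a \<Rightarrow> 'a) \<Rightarrow> (complex \<Rightarrow> 'a \<times> 'a) \<Rightarrow> complex \<Rightarrow> 'a \<times> 'a" where
  "stem_cj cj F = (\<lambda>z. ac_cj cj (F z))"

definition stem_N :: "('a::real_vector \<Rightarrow> 'a \<Rightarrow> 'a) \<Rightarrow> ('a \<Rightarrow> 'a) \<Rightarrow> (complex \<Rightarrow> 'a \<times> 'a) \<Rightarrow> complex \<Rightarrow> 'a \<times> 'a" where
  "stem_N mul cj F = stem_prod mul F (stem_cj cj F)"

definition slice_preserving_stem :: "'a::real_vector \<Rightarrow> complex set \<Rightarrow> (complex \<Rightarrow> 'a \<times> 'a) \<Rightarrow> bool" where
  "slice_preserving_stem one D F \<longleftrightarrow>
     (\<forall>z\<in>D. fst (F z) \<in> range (\<lambda>r. r *\<^sub>R one) \<and> snd (F z) \<in> range (\<lambda>r. r *\<^sub>R one))"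

definition tame_stem ::
  "('a::real_vector \<Rightarrow> 'a \<Rightarrow> 'a) \<Rightarrow> 'a \<Rightarrow> ('a \<Rightarrow> 'a) \<Rightarrow> complex set \<Rightarrow> (complex \<Rightarrow> 'a \<times> 'a) \<Rightarrow> bool" where
  "tame_stem mul one cj D F \<longleftrightarrow>
     slice_preserving_stem one D (stem_N mul cj F) \<and>
     same_slice_on mul one cj D (stem_N mul cj F) (stem_N mul cj (stem_cj cj F))"

end

theory Submission
  imports Defs "HOL-Complex_Analysis.Complex_Analysis"
begin


lemma cancel2: fixes a b :: "'b::real_vector" assumes "a + a = b + b" shows "a = b"
proof -
  have "(2::real) *\<^sub>R a = (2::real) *\<^sub>R b" using assms by (simp add: scaleR_2)
  thus ?thesis by simp
qed

lemma inv_zero: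
  fixes m :: "'b::real_vector \<Rightarrow> 'b \<Rightarrow> 'b"
  assumes L: "\<And>a b g. m (m a b) g + m (m b a) g = m a (m b g) + m b (m a g)"
    and Ra: "\<And>a b. m a (m b b) = m (m a b) b"
    and e1: "\<And>g. m e g = g" and e2: "\<And>g. m g e = g"
    and add: "\<And>a g h. m a (g + h) = m a g + m a h"
    and xu: "m x u = e" and ux: "m u x = e" and xg: "m x g = 0"
  shows "g = 0"
proof -
  have sub: "m a (g - h) = m a g - m a h" for a g h
    using add[of a "g - h" h] by (simp add: algebra_simps)
  have z: "m a 0 = 0" for a using add[of a 0 0] by simp
  have La: "m (m a a) g = m a (m a g)" for a g
    using L[of a a g] cancel2 by metis
  define P where "P h = m x (m u h)" for h
  define Q where "Q h = m u (m x h)" for h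
  have i: "P h + Q h = h + h" for h
    using L[of u x h] by (simp add: P_def Q_def ux xu e1 add.commute)
  have x2u: "m (m x x) u = x" using La[of x u] by (simp add: xu e2)
  have ux2: "m u (m x x) = x" using Ra[of u x] by (simp add: ux e1)
  have ii: "m x (Q h) = m x h" for h
  proof -
    have 1: "m x h + m x h = m (m x x) (m u h) + m u (m (m x x) h)"
      using L[of "m x x" u h] by (simp add: x2u ux2)
    have Ph: "m x (m u h) = h + h - Q h" using i[of h] by (simp add: P_def algebra_simps)
    have Pxh: "m x (m u (m x h)) = m x h + m x h - Q (m x h)" using i[of "m x h"] by (simp add: P_def algebra_simps)
    have a: "m (m x x) (m u h) = m x h + m x h - m x (Q h)"
      by (simp add: La Ph sub add)
    have b: "m u (m (m x x) h) = m x h + m x h - m x (Q h)"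
    proof -
      have "m u (m (m x x) h) = m u (m x (m x h))" by (simp add: La)
      also have "\<dots> = Q (m x h)" by (simp add: Q_def)
      also have "\<dots> = m x h + m x h - m x (m u (m x h))" using i[of "m x h"] by (simp add: P_def algebra_simps)
      finally show ?thesis by (simp add: Q_def)
    qed
    have "m x (Q h) + m x (Q h) = m x h + m x h"
      using 1 a b by (simp add: algebra_simps)
    thus ?thesis using cancel2 by metis
  qed
  have Qg: "Q g = 0" by (simp add: Q_def xg z)
  have Pg: "P g = g + g" using i[of g] Qg by simp
  have "P (P g) = P g" using ii[of "m u g"] by (simp add: P_def Q_def)
  hence "P g + P g = P g" using Pg by (simp add: P_def add)
  hence "P g = 0" by simp
  thus "g = 0" using Pg cancel2[of g 0] by simp
qed



context
  fixes mul :: "'a::euclidean_space \<Rightarrow> 'a \<Rightarrow> 'a" and one :: 'a and cj :: "'a \<Rightarrow> 'a"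
  assumes alg: "alt_star_alg mul one cj"
begin

lemma bil: "bilinear mul" using alg by (simp add: alt_star_alg_def)
lemmas ms = bilinear_ladd[OF bil] bilinear_radd[OF bil] bilinear_lmul[OF bil] bilinear_rmul[OF bil]
  bilinear_lneg[OF bil] bilinear_rneg[OF bil] bilinear_lzero[OF bil] bilinear_rzero[OF bil]
  bilinear_lsub[OF bil] bilinear_rsub[OF bil]

lemma altL: "mul (mul x x) y = mul x (mul x y)" and altR: "mul y (mul x x) = mul (mul y x) x"
  using alg by (auto simp: alt_star_alg_def assoc_alg_def)

lemma unitL: "mul one x = x" and unitR: "mul x one = x" using alg by (auto simp: alt_star_alg_def)

definition linL where "linL x y z = mul (mul x y) z + mul (mul y x) z - mul x (mul y z) - mul y (mul x z)"
definition linR where "linR x y z = mul x (mul y z) + mul x (mul z y) - mul (mul x y) z - mul (mul x z) y"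

lemma linL0: "linL x y z = 0"
proof -
  have "mul (mul (x+y) (x+y)) z = mul (x+y) (mul (x+y) z)" by (rule altL)
  thus ?thesis by (simp add: linL_def ms altL algebra_simps)
qed

lemma linR0: "linR x y z = 0"
proof -
  have "mul x (mul (y+z) (y+z)) = mul (mul x (y+z)) (y+z)" by (rule altR)
  thus ?thesis by (simp add: linR_def ms altR algebra_simps)
qed

lemma acL: "ac_mul mul (ac_mul mul p q) r + ac_mul mul (ac_mul mul q p) r
   = ac_mul mul p (ac_mul mul q r) + ac_mul mul q (ac_mul mul p r)"
proof -
  obtain p1 p2 q1 q2 r1 r2 where "p = (p1,p2)" "q = (q1,q2)" "r = (r1,r2)" by (cases p, cases q, cases r) auto
  note d = this
  have e1: "fst (ac_mul mul (ac_mul mul p q) r + ac_mul mul (ac_mul mul q p) r)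
     - fst (ac_mul mul p (ac_mul mul q r) + ac_mul mul q (ac_mul mul p r))
     = linL p1 q1 r1 - linL p2 q2 r1 - linL p1 q2 r2 - linL p2 q1 r2"
    by (simp add: d ac_mul_def linL_def ms algebra_simps)
  have e2: "snd (ac_mul mul (ac_mul mul p q) r + ac_mul mul (ac_mul mul q p) r)
     - snd (ac_mul mul p (ac_mul mul q r) + ac_mul mul q (ac_mul mul p r))
     = linL p1 q1 r2 - linL p2 q2 r2 + linL p1 q2 r1 + linL p2 q1 r1"
    by (simp add: d ac_mul_def linL_def ms algebra_simps)
  show ?thesis using e1 e2 by (simp add: linL0 prod_eq_iff)
qed

lemma acRa: "ac_mul mul p (ac_mul mul q q) = ac_mul mul (ac_mul mul p q) q"
proof -
  obtain p1 p2 q1 q2 where "p = (p1,p2)" "q = (q1,q2)" by (cases p, cases q) auto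
  note d = this
  have e1: "fst (ac_mul mul p (ac_mul mul q q)) - fst (ac_mul mul (ac_mul mul p q) q)
     = - linR p2 q1 q2"
    by (simp add: d ac_mul_def linR_def ms altR algebra_simps)
  have e2: "snd (ac_mul mul p (ac_mul mul q q)) - snd (ac_mul mul (ac_mul mul p q) q)
     = linR p1 q1 q2"
    by (simp add: d ac_mul_def linR_def ms altR algebra_simps)
  show ?thesis using e1 e2 by (simp add: linR0 prod_eq_iff)
qed

lemma ac_inv_zero:
  assumes "ac_mul mul x u = (one, 0)" "ac_mul mul u x = (one, 0)" "ac_mul mul x g = 0"
  shows "g = 0"
  apply (rule inv_zero[of "ac_mul mul" "(one,0)" x u g])
  using acL acRa assms by (auto simp: ac_mul_def ms unitL unitR prod_eq_iff)

end


context
  fixes mul :: "'a::euclidean_space \<Rightarrow> 'a \<Rightarrow> 'a" and one :: 'a and cj :: "'a \<Rightarrow> 'a"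
  assumes alg: "alt_star_alg mul one cj"
begin

lemmas ms' = ms[OF alg]

lemma lincj: "linear cj" and cjcj: "cj (cj x) = x" and cjmul: "cj (mul x y) = mul (cj y) (cj x)"
  using alg by (auto simp: alt_star_alg_def)

lemma cjneg: "cj (- x) = - cj x" using linear_neg[OF lincj] .
lemma cjadd: "cj (x + y) = cj x + cj y" using linear_add[OF lincj] .
lemma cjsub: "cj (x - y) = cj x - cj y" using linear_diff[OF lincj] .
lemma cjzero: "cj 0 = 0" using linear_0[OF lincj] .
lemma cjscale: "cj (r *\<^sub>R x) = r *\<^sub>R cj x" using linear_scale[OF lincj] .

lemma sph_cj: assumes "J \<in> sphS mul one cj" shows "cj J = - J"
proof -
  have "J + cj J = 0" using assms by (simp add: sphS_def trA_def)
  thus ?thesis by (metis add.commute eq_neg_iff_add_eq_0)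
qed

lemma sph_neg: assumes "J \<in> sphS mul one cj" shows "- J \<in> sphS mul one cj"
  using assms sph_cj[OF assms] by (simp add: sphS_def trA_def nA_def cjneg ms')

lemma sph_sq: assumes "J \<in> sphS mul one cj" shows "mul J J = - one"
  using assms sph_cj[OF assms] by (simp add: sphS_def nA_def ms' minus_equation_iff)

lemma vanish_iff:
  assumes "sphS mul one cj \<noteq> {}"
  shows "vanishes_on mul one cj D H \<longleftrightarrow> (\<forall>z\<in>D. H z = 0)"
proof
  assume "\<forall>z\<in>D. H z = 0" thus "vanishes_on mul one cj D H"
    by (simp add: vanishes_on_def slice_val_def ms')
next
  assume v: "vanishes_on mul one cj D H"
  obtain J where J: "J \<in> sphS mul one cj" using assms by auto
  show "\<forall>z\<in>D. H z = 0"
  proof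
    fix z assume z: "z \<in> D"
    have 1: "fst (H z) + mul J (snd (H z)) = 0" using v z J by (simp add: vanishes_on_def slice_val_def)
    have "fst (H z) + mul (-J) (snd (H z)) = 0" using v z sph_neg[OF J]
      unfolding vanishes_on_def slice_val_def by blast
    hence 2: "fst (H z) - mul J (snd (H z)) = 0" by (simp add: ms')
    have "fst (H z) + fst (H z) = 0" using 1 2
      by (metis add_diff_add add_diff_cancel_left' diff_self)
    hence f: "fst (H z) = 0" using cancel2[of "fst (H z)" 0] by simp
    hence j: "mul J (snd (H z)) = 0" using 1 by simp
    have "mul J (mul J (snd (H z))) = - snd (H z)"
      using altL[OF alg, of J "snd (H z)"] sph_sq[OF J] by (simp add: ms' unitL[OF alg])
    hence "snd (H z) = 0" using j by (simp add: ms')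
    thus "H z = 0" using f by (simp add: prod_eq_iff)
  qed
qed

lemma same_iff:
  assumes "sphS mul one cj \<noteq> {}"
  shows "same_slice_on mul one cj D F G \<longleftrightarrow> (\<forall>z\<in>D. F z = G z)"
proof -
  have "same_slice_on mul one cj D F G \<longleftrightarrow> vanishes_on mul one cj D (\<lambda>z. F z - G z)"
    by (simp add: same_slice_on_def vanishes_on_def slice_val_def ms' algebra_simps)
  thus ?thesis using vanish_iff[OF assms] by simp
qed

definition csc :: "complex \<Rightarrow> 'b::real_vector \<times> 'b \<Rightarrow> 'b \<times> 'b" where
  "csc w p = (Re w *\<^sub>R fst p - Im w *\<^sub>R snd p, Re w *\<^sub>R snd p + Im w *\<^sub>R fst p)"

lemma csc_mulR: "ac_mul mul p (csc w q) = csc w (ac_mul mul p q)"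
  by (simp add: csc_def ac_mul_def ms' algebra_simps)
lemma csc_mulL: "ac_mul mul (csc w p) q = csc w (ac_mul mul p q)"
  by (simp add: csc_def ac_mul_def ms' algebra_simps)
lemma csc_csc: "csc w (csc v p) = csc (w * v) p"
  by (simp add: csc_def algebra_simps)
lemma csc_one: "csc 1 p = p" by (simp add: csc_def)
lemma csc_e: "(a *\<^sub>R one, b *\<^sub>R one) = csc (Complex a b) (one, 0)" by (simp add: csc_def)

lemma accj_mul: "ac_cj cj (ac_mul mul p q) = ac_mul mul (ac_cj cj q) (ac_cj cj p)"
  by (simp add: ac_cj_def ac_mul_def cjadd cjsub cjmul algebra_simps)

lemma pointwise:
  assumes N: "ac_mul mul x (ac_cj cj x) = (a *\<^sub>R one, b *\<^sub>R one)"
    and Nc: "ac_mul mul (ac_cj cj x) x = (a *\<^sub>R one, b *\<^sub>R one)"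
    and ab: "(a,b) \<noteq> (0,0)"
    and g: "ac_mul mul x g = 0 \<or> ac_mul mul g x = 0"
  shows "g = 0"
proof -
  define y where "y = ac_cj cj x"
  define w where "w = inverse (Complex a b)"
  have c0: "Complex a b \<noteq> 0" using ab by (auto simp: complex_eq_iff)
  have wc: "w * Complex a b = 1" using c0 by (simp add: w_def)
  have xy: "ac_mul mul x (csc w y) = (one, 0)" "ac_mul mul (csc w y) x = (one, 0)"
    "ac_mul mul y (csc w x) = (one, 0)" "ac_mul mul (csc w x) y = (one, 0)"
    using N Nc wc by (simp_all add: y_def csc_mulR csc_mulL csc_e csc_csc csc_one)
  show ?thesis
  proof (cases "ac_mul mul x g = 0")
    case True
    show ?thesis by (rule ac_inv_zero[OF alg xy(1) xy(2) True])
  next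
    case False
    hence "ac_mul mul g x = 0" using g by simp
    hence "ac_cj cj (ac_mul mul g x) = 0" by (simp add: ac_cj_def cjzero zero_prod_def)
    hence "ac_mul mul y (ac_cj cj g) = 0" by (simp add: accj_mul y_def)
    hence "ac_cj cj g = 0" by (rule ac_inv_zero[OF alg xy(3) xy(4)])
    hence "ac_cj cj (ac_cj cj g) = 0" by (simp add: ac_cj_def cjzero zero_prod_def)
    thus ?thesis by (simp add: ac_cj_def cjcj)
  qed
qed

end


context
  fixes mul :: "'a::euclidean_space \<Rightarrow> 'a \<Rightarrow> 'a" and one :: 'a and cj :: "'a \<Rightarrow> 'a"
  assumes alg: "alt_star_alg mul one cj"
begin

lemmas ms'' = ms[OF alg]

definition Lc :: "'a \<times> 'a \<Rightarrow> complex" where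
  "Lc p = complex_of_real (fst p \<bullet> one / (one \<bullet> one)) + \<i> * complex_of_real (snd p \<bullet> one / (one \<bullet> one))"

lemma one_nz: "one \<noteq> 0" using alg by (simp add: alt_star_alg_def)

lemma Lc_e: "Lc (a *\<^sub>R one, b *\<^sub>R one) = Complex a b"
  using one_nz by (simp add: Lc_def complex_eq_iff)

lemma Lc_i: "Lc (ac_i p) = \<i> * Lc p"
  by (simp add: Lc_def ac_i_def algebra_simps)

lemma bl_Lc: "bounded_linear Lc"
  unfolding linear_conv_bounded_linear[symmetric]
  by (rule linearI) (simp_all add: Lc_def complex_eq_iff inner_add_left add_divide_distrib)

lemma bl_accj: "bounded_linear (ac_cj cj)"
  unfolding linear_conv_bounded_linear[symmetric]
  by (rule linearI) (simp_all add: ac_cj_def cjadd[OF alg] cjscale[OF alg])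

lemma bb_acmul: "bounded_bilinear (ac_mul mul)"
  unfolding bilinear_conv_bounded_bilinear[symmetric] bilinear_def
  by (auto intro!: linearI simp: ac_mul_def ms'' algebra_simps)

lemma aci_mulL: "ac_mul mul (ac_i p) q = ac_i (ac_mul mul p q)"
  by (simp add: ac_i_def ac_mul_def ms'' algebra_simps)
lemma aci_mulR: "ac_mul mul p (ac_i q) = ac_i (ac_mul mul p q)"
  by (simp add: ac_i_def ac_mul_def ms'' algebra_simps)
lemma aci_cj: "ac_cj cj (ac_i p) = ac_i (ac_cj cj p)"
  by (simp add: ac_i_def ac_cj_def cjneg[OF alg])
lemma accj_add: "ac_cj cj (p + q) = ac_cj cj p + ac_cj cj q"
  by (simp add: ac_cj_def cjadd[OF alg])
lemma acm_addL: "ac_mul mul (p + q) r = ac_mul mul p r + ac_mul mul q r"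
  by (rule bounded_bilinear.add_left[OF bb_acmul])
lemma acm_addR: "ac_mul mul r (p + q) = ac_mul mul r p + ac_mul mul r q"
  by (rule bounded_bilinear.add_right[OF bb_acmul])
lemma accj0: "ac_cj cj 0 = 0"
  by (simp add: ac_cj_def cjzero[OF alg] zero_prod_def)
lemma aci_add: "ac_i (p + q) = ac_i p + ac_i q"
  by (simp add: ac_i_def algebra_simps)

lemma holo:
  assumes reg: "regular_stem_on D F" and oD: "open D"
  shows "(\<lambda>z. Lc (stem_N mul cj F z)) holomorphic_on D"
proof -
  obtain DF where DF: "\<And>z. z \<in> D \<Longrightarrow> (F has_derivative DF z) (at z)"
    and CR0: "\<And>z. z\<in>D \<Longrightarrow> (1/2::real) *\<^sub>R (DF z 1 + ac_i (DF z \<i>)) = 0"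
    using reg unfolding regular_stem_on_def by blast
  show ?thesis unfolding holomorphic_on_open[OF oD]
  proof
    fix z assume z: "z \<in> D"
    let ?N = "\<lambda>h. ac_mul mul (F z) (ac_cj cj (DF z h)) + ac_mul mul (DF z h) (ac_cj cj (F z))"
    have dcj: "((\<lambda>w. ac_cj cj (F w)) has_derivative (\<lambda>h. ac_cj cj (DF z h))) (at z)"
      using bounded_linear.has_derivative[OF bl_accj DF[OF z]] .
    have dN: "((\<lambda>w. ac_mul mul (F w) (ac_cj cj (F w))) has_derivative ?N) (at z)"
      using bounded_bilinear.FDERIV[OF bb_acmul DF[OF z] dcj] .
    have dc: "((\<lambda>w. Lc (stem_N mul cj F w)) has_derivative (\<lambda>h. Lc (?N h))) (at z)"
      using bounded_linear.has_derivative[OF bl_Lc dN]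
      by (simp add: stem_N_def stem_prod_def stem_cj_def)
    have blN: "bounded_linear (\<lambda>h. Lc (?N h))" using has_derivative_bounded_linear[OF dc] .
    have CR: "DF z 1 + ac_i (DF z \<i>) = 0" using CR0[OF z] by simp
    have "?N 1 + ac_i (?N \<i>) = ac_mul mul (F z) (ac_cj cj (DF z 1 + ac_i (DF z \<i>)))
         + ac_mul mul (DF z 1 + ac_i (DF z \<i>)) (ac_cj cj (F z))"
      by (simp add: aci_add aci_mulL aci_mulR aci_cj accj_add acm_addL acm_addR add_ac)
    also have "\<dots> = 0" unfolding CR
      by (simp add: bounded_bilinear.zero_left[OF bb_acmul] bounded_bilinear.zero_right[OF bb_acmul] accj0)
    finally have "?N 1 + ac_i (?N \<i>) = 0" .
    hence "Lc (?N 1 + ac_i (?N \<i>)) = 0" by (simp add: Lc_def zero_prod_def)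
    hence c1: "Lc (?N 1) + \<i> * Lc (?N \<i>) = 0"
      using linear_add[OF bounded_linear.linear[OF bl_Lc]] by (simp add: Lc_i)
    have "\<i> * (Lc (?N 1) + \<i> * Lc (?N \<i>)) = 0" using c1 by simp
    hence ci: "Lc (?N \<i>) = \<i> * Lc (?N 1)"
      by (simp add: ring_distribs mult.assoc[symmetric])
    define \<phi> where "\<phi> = (\<lambda>h. Lc (?N h))"
    have lin: "linear \<phi>" using bounded_linear.linear[OF blN] by (simp add: \<phi>_def)
    have eq: "(\<lambda>h. Lc (?N h)) = (*) (\<phi> 1)"
    proof
      fix h :: complex
      have hh: "h = Re h *\<^sub>R 1 + Im h *\<^sub>R \<i>" by (simp add: complex_eq_iff)
      have "\<phi> h = Re h *\<^sub>R \<phi> 1 + Im h *\<^sub>R \<phi> \<i>"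
        by (subst hh) (simp only: linear_add[OF lin] linear_scale[OF lin])
      also have "\<dots> = of_real (Re h) * \<phi> 1 + of_real (Im h) * (\<i> * \<phi> 1)" using ci
        by (simp add: scaleR_conv_of_real \<phi>_def)
      also have "\<dots> = \<phi> 1 * (of_real (Re h) + \<i> * of_real (Im h))" by (simp add: algebra_simps)
      also have "\<dots> = \<phi> 1 * h" using complex_eq[of h, symmetric] by (rule arg_cong)
      finally show "Lc (?N h) = \<phi> 1 * h" by (simp add: \<phi>_def)
    qed
    show "\<exists>f'. ((\<lambda>z. Lc (stem_N mul cj F z)) has_field_derivative f') (at z)"
      using dc unfolding eq has_field_derivative_def by blast
  qed
qed

end


theorem proposition5p18:
  fixes mul :: "'a::euclidean_space \<Rightarrow> 'a \<Rightarrow> 'a"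
    and one :: 'a and cj :: "'a \<Rightarrow> 'a"
    and D :: "complex set"
    and F :: "complex \<Rightarrow> 'a \<times> 'a"
  assumes alg: "alt_star_alg mul one cj"
    and sph: "sphS mul one cj \<noteq> {}"
    and D: "admissible_D D"
    and dom: "slice_domain_D D \<or> product_domain_D D"
    and f_reg: "regular_stem_on D F"
    and f_tame: "tame_stem mul one cj D F"
    and Nf: "\<not> vanishes_on mul one cj D (stem_N mul cj F)"
  shows "\<forall>G. cont_stem_on D G \<longrightarrow>
           (vanishes_on mul one cj D (stem_prod mul F G) \<or>
            vanishes_on mul one cj D (stem_prod mul G F)) \<longrightarrow>
           vanishes_on mul one cj D G"
proof (intro allI impI)
  fix G assume Gc: "cont_stem_on D G"
    and prod: "vanishes_on mul one cj D (stem_prod mul F G) \<or> vanishes_on mul one cj D (stem_prod mul G F)"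
  have oD: "open D" using D by (simp add: admissible_D_def)
  note vz = vanish_iff[OF alg sph]
  note msa = ms[OF alg]
  define N where "N = stem_N mul cj F"
  define c where "c = (\<lambda>z. Lc one (N z))"
  have hol: "c holomorphic_on D" using holo[OF alg f_reg oD] by (simp add: c_def N_def)
  have Nz: "N z = ac_mul mul (F z) (ac_cj cj (F z))" for z
    by (simp add: N_def stem_N_def stem_prod_def stem_cj_def)
  have accj2: "ac_cj cj (ac_cj cj p) = p" for p by (simp add: ac_cj_def cjcj[OF alg])
  have hsp: "\<exists>a b. N z = (a *\<^sub>R one, b *\<^sub>R one)" if "z \<in> D" for z
  proof -
    have "fst (N z) \<in> range (\<lambda>r. r *\<^sub>R one) \<and> snd (N z) \<in> range (\<lambda>r. r *\<^sub>R one)"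
      using f_tame that by (simp add: tame_stem_def slice_preserving_stem_def N_def)
    then obtain a b where "fst (N z) = a *\<^sub>R one" "snd (N z) = b *\<^sub>R one" by blast
    thus ?thesis by (metis prod.collapse)
  qed
  have hNc: "ac_mul mul (ac_cj cj (F z)) (F z) = N z" if "z \<in> D" for z
  proof -
    have "\<forall>z\<in>D. N z = stem_N mul cj (stem_cj cj F) z"
      using f_tame same_iff[OF alg sph] by (simp add: tame_stem_def N_def)
    thus ?thesis using that by (simp add: stem_N_def stem_prod_def stem_cj_def accj2)
  qed
  have Nc0: "N z = 0 \<longleftrightarrow> c z = 0" if zD: "z \<in> D" for z
  proof -
    obtain a b where ab: "N z = (a *\<^sub>R one, b *\<^sub>R one)" using hsp[OF zD] by blast
    have "c z = Complex a b" by (simp add: c_def ab Lc_e[OF alg])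
    thus ?thesis using ab one_nz[OF alg] by (simp add: complex_eq_iff zero_prod_def)
  qed
  have pw: "N z = 0" if z: "z \<in> D" and g: "G z \<noteq> 0" for z
  proof (rule ccontr)
    assume nz: "N z \<noteq> 0"
    obtain a b where ab: "N z = (a *\<^sub>R one, b *\<^sub>R one)" using hsp[OF z] by blast
    have ab0: "(a,b) \<noteq> (0,0)" using nz ab by (auto simp: zero_prod_def)
    have "ac_mul mul (F z) (G z) = 0 \<or> ac_mul mul (G z) (F z) = 0"
      using prod z by (auto simp: vz stem_prod_def)
    hence "G z = 0"
      using pointwise[OF alg, of "F z" a b "G z"] ab ab0 Nz[of z] hNc[OF z] by simp
    thus False using g by simp
  qed
  obtain z0 where z0: "z0 \<in> D" "N z0 \<noteq> 0" using Nf vz by (auto simp: N_def)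
  have stemN: "N z = 0" if z: "z \<in> D" and c0: "N (cnj z) = 0" for z
  proof -
    have Fc: "F (cnj z) = (fst (F z), - snd (F z))"
      using f_reg z by (simp add: regular_stem_on_def stem_on_def)
    have "N (cnj z) = (fst (N z), - snd (N z))"
      by (simp add: Nz Fc ac_mul_def ac_cj_def msa cjneg[OF alg] algebra_simps)
    thus ?thesis using c0 by (simp add: prod_eq_iff)
  qed
  show "vanishes_on mul one cj D G"
  proof (rule ccontr)
    assume "\<not> ?thesis"
    then obtain z1 where z1: "z1 \<in> D" "G z1 \<noteq> 0" using vz by auto
    have "isCont G z1" using Gc oD z1 continuous_on_eq_continuous_at
      by (auto simp: cont_stem_on_def)
    then obtain e1 where e1: "e1 > 0" "\<And>y. dist z1 y < e1 \<Longrightarrow> G y \<noteq> 0"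
      using continuous_at_avoid z1(2) by blast
    obtain e2 where e2: "e2 > 0" "ball z1 e2 \<subseteq> D" using oD z1(1) open_contains_ball by blast
    define r where "r = min e1 e2"
    have r0: "r > 0" using e1 e2 by (simp add: r_def)
    have bD: "ball z1 r \<subseteq> D" using e2 by (auto simp: r_def)
    have cb: "c z = 0" if "z \<in> ball z1 r" for z
    proof -
      have "z \<in> D" using bD that by auto
      moreover have "G z \<noteq> 0" using e1 that by (auto simp: r_def dist_commute)
      ultimately show ?thesis using pw Nc0 by blast
    qed
    define S where "S = connected_component_set D z1"
    have oS: "open S" using open_connected_component[OF oD] by (simp add: S_def)
    have cS: "connected S" by (simp add: S_def)
    have SD: "S \<subseteq> D" by (simp add: S_def connected_component_subset)
    have z1S: "z1 \<in> S" using z1 by (simp add: S_def)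
    have bS: "ball z1 r \<subseteq> S" unfolding S_def
      by (rule connected_component_maximal) (use r0 bD in auto)
    have S0: "N w = 0" if w: "w \<in> S" for w
    proof -
      have "c w = 0"
        by (rule analytic_continuation[of c S "ball z1 r" z1 w])
           (use holomorphic_on_subset[OF hol SD] oS cS bS z1S w cb r0 in \<open>auto simp: islimpt_ball\<close>)
      thus ?thesis using Nc0 SD w by auto
    qed
    have "N z0 = 0"
      using dom
    proof
      assume "slice_domain_D D"
      hence "S = D" by (simp add: S_def slice_domain_D_def connected_component_eq_self z1)
      thus ?thesis using S0 z0 by auto
    next
      assume "product_domain_D D"
      then obtain C where C: "components D = {C, cnj ` C}" by (auto simp: product_domain_D_def)
      have "S \<in> components D" using z1 by (auto simp: S_def components_iff)
      hence SC: "S = C \<or> S = cnj ` C" using C by auto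
      have "z0 \<in> C \<union> cnj ` C" using z0 Union_components[of D] C by auto
      moreover have "cnj z0 \<in> cnj ` C" if "z0 \<in> C" using that by auto
      moreover have "cnj z0 \<in> C" if "z0 \<in> cnj ` C" using that by auto
      ultimately have "z0 \<in> S \<or> cnj z0 \<in> S" using SC by blast
      thus ?thesis using S0 stemN z0(1) by blast
    qed
    thus False using z0 by simp
  qed
qed


end
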